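(* For integers $m\ge 1$ and $n\ge 0$ let $$D_n(m)=\sum_{k=0}^{n}\binom{n-k}{k}^{m},$$ where $\binom{a}{b}=0$ whenever $b>a$. Let $(F_j)_{j\ge0}$ be the Fibonacci numbers ($F_0=0$, $F_1=1$, $F_j=F_{j-1}+F_{j-2}$) and $(L_j)_{j\ge0}$ the Lucas numbers ($L_0=2$, $L_1=1$, $L_j=L_{j-1}+L_{j-2}$). Then for every positive integer $m$, $$\lim_{n\to\infty}\frac{D_{n+1}(m)}{D_n(m)}=\frac{F_m\sqrt5+L_m}{2}.$$
   Context: $D_n(m)$ is the number of $m$-tuples of tilings of a $2\times n$ strip by dominoes in which all tilings have the same number of vertical dominoes; equivalently, the number of $m$-tuples of compositions of $n$ with parts in $\{1,2\}$ all having the same number of parts. *)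

theory Defs
  imports Complex_Main
begin

definition D :: "nat \<Rightarrow> nat \<Rightarrow> nat" where
  "D n m = (\<Sum>k = 0..n. ((n - k) choose k) ^ m)"

fun fibo :: "nat \<Rightarrow> nat" where
  "fibo 0 = 0"
| "fibo (Suc 0) = 1"
| "fibo (Suc (Suc j)) = fibo (Suc j) + fibo j"

fun lucas :: "nat \<Rightarrow> nat" where
  "lucas 0 = 2"
| "lucas (Suc 0) = 1"
| "lucas (Suc (Suc j)) = lucas (Suc j) + lucas j"

end

theory Submission imports Defs begin

lemma absorb_id:
  assumes "k \<le> n"
  shows "((Suc n - k) choose k) * (Suc n - 2*k) = ((n - k) choose k) * (Suc n - k)"
proof -
  define a where "a = n - k"
  have e1: "Suc n - k = Suc a" "Suc n - 2*k = Suc a - k" using assms by (auto simp: a_def)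
  show ?thesis unfolding e1 a_def[symmetric]
    using binomial_absorb_comp[of "Suc a" k] by (simp add: mult.commute)
qed

lemma ratio_id:
  assumes "2*j+2 \<le> n"
  shows "((n - Suc j) choose Suc j) * ((j+1)*(n-j)) = ((n-j) choose j) * ((n-2*j)*(n-2*j-1))"
proof -
  define a where "a = n - Suc j"
  have e: "n - j = Suc a" "n - 2*j = Suc a - j" "n-2*j-1 = a - j" using assms by (auto simp: a_def)
  have h1: "Suc j * (a choose Suc j) = (a - j) * (a choose j)"
    using binomial_absorption[of j a] binomial_absorb_comp[of a j] by simp
  have h2: "(Suc a - j) * (Suc a choose j) = Suc a * (a choose j)"
    using binomial_absorb_comp[of "Suc a" j] by simp
  show ?thesis unfolding e a_def[symmetric]
  proof -
    have "(a choose Suc j) * ((j + 1) * Suc a) = (Suc j * (a choose Suc j)) * Suc a" by (simp add: algebra_simps)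
    also have "\<dots> = ((a - j) * (a choose j)) * Suc a" by (simp only: h1)
    also have "\<dots> = (a - j) * (Suc a * (a choose j))" by (metis mult.commute mult.assoc)
    also have "\<dots> = (a - j) * ((Suc a - j) * (Suc a choose j))" by (simp only: h2)
    finally have X: "(a choose Suc j) * ((j + 1) * Suc a) = (Suc a choose j) * ((Suc a - j) * (a - j))"
      by (metis (no_types, lifting) mult.assoc mult.commute)
    have "Suc a - j - 1 = a - j" by simp
    with X show "(a choose Suc j) * ((j + 1) * Suc a) = (Suc a choose j) * ((Suc a - j) * (Suc a - j - 1))"
      by (simp only:)
  qed
qed

definition alpha :: real where "alpha = (5 - sqrt 5)/10"
definition tt :: "nat \<Rightarrow> nat \<Rightarrow> real" where "tt n k = real ((n-k) choose k)"

lemma D_real: "real (D n m) = (\<Sum>k=0..n. tt n k ^ m)"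
  by (simp add: D_def tt_def)

lemma tt_nonneg: "0 \<le> tt n k" by (simp add: tt_def)

lemma s5: "sqrt 5 ^ 2 = 5" "2 < sqrt 5" "sqrt 5 < 3"
proof -
  show "sqrt 5 ^ 2 = 5" by simp
  show "2 < sqrt 5" by (rule real_less_rsqrt) simp
  show "sqrt 5 < 3" by (rule real_less_lsqrt) auto
qed

lemma alpha_bounds: "0 < alpha" "alpha < 1/2"
  using s5 by (auto simp: alpha_def)

lemma alpha_prod: "alpha * (1 - alpha) = 1/5"
proof -
  have "sqrt 5 * sqrt 5 = 5" by simp
  then show ?thesis by (simp add: alpha_def field_simps)
qed

lemma g_factor: "5*x^2 - 5*x + 1 = 5*(x - alpha)*(x - (1 - alpha))"
proof -
  have "5*(x - alpha)*(x - (1 - alpha)) = 5*x^2 - 5*x + 5*(alpha*(1-alpha))"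
    by (simp add: algebra_simps power2_eq_square)
  then show ?thesis using alpha_prod by simp
qed

lemma g_pos: "x < alpha \<Longrightarrow> 5*x^2 - 5*x + 1 > 0"
proof -
  assume "x < alpha"
  then have "(x - alpha)*(x - (1 - alpha)) > 0" using alpha_bounds by (intro mult_neg_neg) auto
  then have "5*((x - alpha)*(x - (1 - alpha))) > 0" by simp
  then show ?thesis unfolding g_factor by (simp only: mult.assoc)
qed

lemma g_neg: "alpha < x \<Longrightarrow> x < 1/2 \<Longrightarrow> 5*x^2 - 5*x + 1 < 0"
proof -
  assume "alpha < x" "x < 1/2"
  then have "(x - alpha)*(x - (1 - alpha)) < 0" using alpha_bounds by (intro mult_pos_neg) auto
  then have "5*((x - alpha)*(x - (1 - alpha))) < 0" by simp
  then show ?thesis unfolding g_factor by (simp only: mult.assoc)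
qed

lemma ev_ge: "eventually (\<lambda>n. X \<le> real n) sequentially"
proof -
  obtain N :: nat where "X < real N" using reals_Archimedean2 by blast
  then show ?thesis unfolding eventually_sequentially by (metis less_le_trans less_imp_le of_nat_le_iff)
qed

lemma step_low:
  fixes b c Q :: real
  assumes b: "b < 1/2" and Qd: "Q = (1-2*b)^2 - c*b*(1-b)" and Q: "Q > 0" and c: "c > 0"
    and n: "real n \<ge> (1+c)/Q" and j: "real j \<le> b * real n"
  shows "c * tt n j \<le> tt n (Suc j)"
proof -
  have "(1+c)/Q > 0" using c Q by simp
  then have npos: "real n > 0" using n by linarith
  have nQ: "real n * Q \<ge> 1 + c" using n Q by (simp add: pos_divide_le_eq)
  have "b * real n \<le> 1/2 * real n" by (rule mult_right_mono) (use b npos in auto)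
  then have jn1: "real j + b*real n - real n \<le> 0" and jlt: "real j < real n"
    using j npos by linarith+
  have j0: "real j - b*real n \<le> 0" using j by linarith
  have H: "(real n - 2*real j)^2 - c*real j*(real n - real j) - real n^2 * Q
      = (4+c)*((real j - b*real n)*(real j + b*real n - real n))"
    by (simp add: Qd power2_eq_square algebra_simps)
  have "(real j - b*real n)*(real j + b*real n - real n) \<ge> 0"
    using j0 jn1 by (rule mult_nonpos_nonpos)
  then have Hp: "(4+c)*((real j - b*real n)*(real j + b*real n - real n)) \<ge> 0"
    using c by simp
  have nn: "real n^2 * Q \<ge> (1+c)*real n"
  proof -
    have "real n * (real n * Q) \<ge> real n * (1+c)" using nQ npos by (intro mult_left_mono) auto
    then show ?thesis by (simp add: power2_eq_square algebra_simps)
  qed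
  have lin: "(real n - 2*real j) + c*(real n - real j) \<le> (1+c)*real n"
  proof -
    have "c * (real n - real j) \<le> c * real n" using c by (intro mult_left_mono) auto
    then show ?thesis by (simp add: algebra_simps)
  qed
  have ex: "(real n - 2*real j)*(real n - 2*real j - 1) - c*(real j + 1)*(real n - real j)
     = ((real n - 2*real j)^2 - c*real j*(real n - real j)) - ((real n - 2*real j) + c*(real n - real j))"
    by (simp add: power2_eq_square algebra_simps)
  have key: "(real n - 2*real j)*(real n - 2*real j - 1) \<ge> c*(real j + 1)*(real n - real j)"
    using ex H Hp nn lin by linarith
  have pos: "c*(real j + 1)*(real n - real j) > 0" using c jlt by simp
  have a1: "real n - 2*real j \<ge> 0" using j b npos \<open>b * real n \<le> 1/2 * real n\<close> by linarith
  have prodpos: "(real n - 2*real j)*(real n - 2*real j - 1) > 0" using key pos by linarith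
  have a2: "real n - 2*real j - 1 > 0"
  proof (rule ccontr)
    assume "\<not> ?thesis"
    then have "(real n - 2*real j)*(real n - 2*real j - 1) \<le> 0"
      using a1 by (intro mult_nonneg_nonpos) auto
    then show False using prodpos by linarith
  qed
  then have "real (2*j+1) < real n" by simp
  then have jj: "2*j+2 \<le> n" by linarith
  have "real (((n - Suc j) choose Suc j) * ((j+1)*(n-j))) = real (((n-j) choose j) * ((n-2*j)*(n-2*j-1)))"
    using ratio_id[OF jj] by metis
  then have F: "real ((n - Suc j) choose Suc j) * ((real j + 1) * real (n-j)) = real ((n-j) choose j) * (real (n-2*j) * real (n-2*j-1))"
    by (simp only: of_nat_mult of_nat_add of_nat_1)
  have e: "real (n - j) = real n - real j" "real (n - 2*j) = real n - 2*real j" "real (n-2*j-1) = real n - 2*real j - 1"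
    using jj by (simp_all add: of_nat_diff)
  have idr: "tt n (Suc j) * ((real j + 1)*(real n - real j)) = tt n j * ((real n - 2*real j)*(real n - 2*real j - 1))"
    using F unfolding e tt_def by simp
  have "(c * tt n j) * ((real j + 1)*(real n - real j)) = tt n j * (c*(real j + 1)*(real n - real j))"
    by (simp add: algebra_simps)
  also have "\<dots> \<le> tt n j * ((real n - 2*real j)*(real n - 2*real j - 1))"
    using key tt_nonneg by (intro mult_left_mono) auto
  also have "\<dots> = tt n (Suc j) * ((real j + 1)*(real n - real j))" using idr by simp
  finally show ?thesis using jlt by (simp add: mult_le_cancel_right_pos)
qed

lemma step_up:
  fixes b c :: real
  assumes b: "b < 1/2" "0 < b" and Qd: "c*(1-2*b)^2 - b*(1-b) \<le> 0" and c: "c > 0"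
    and j: "real j \<ge> b * real n"
  shows "c * tt n (Suc j) \<le> tt n j"
proof (cases "2*j+2 \<le> n")
  case False
  then have "tt n (Suc j) = 0" by (simp add: tt_def)
  then show ?thesis using tt_nonneg by simp
next
  case jj: True
  have jn: "real j \<le> real n / 2" using jj by simp
  have jn1: "real j + b*real n - real n \<le> 0"
  proof -
    have "b * real n \<le> 1/2 * real n" by (rule mult_right_mono) (use b in auto)
    then show ?thesis using jn by linarith
  qed
  have j0: "real j - b*real n \<ge> 0" using j by linarith
  have H: "c*(real n - 2*real j)^2 - real j*(real n - real j) - real n^2 * (c*(1-2*b)^2 - b*(1-b))
      = (4*c+1)*((real j - b*real n)*(real j + b*real n - real n))"
    by (simp add: power2_eq_square algebra_simps)
  have "(real j - b*real n)*(real j + b*real n - real n) \<le> 0"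
    using j0 jn1 by (rule mult_nonneg_nonpos)
  then have Hp: "(4*c+1)*((real j - b*real n)*(real j + b*real n - real n)) \<le> 0"
    using c by (simp add: mult_nonneg_nonpos)
  have "real n^2 * (c*(1-2*b)^2 - b*(1-b)) \<le> 0" using Qd by (simp add: mult_nonneg_nonpos)
  then have k1: "c*(real n - 2*real j)^2 \<le> real j*(real n - real j)" using H Hp by linarith
  have a1: "real n - 2*real j \<ge> 0" using jn by linarith
  have k2: "c*((real n - 2*real j)*(real n - 2*real j - 1)) \<le> c*(real n - 2*real j)^2"
    using c a1 by (intro mult_left_mono) (auto simp: power2_eq_square intro!: mult_left_mono)
  have k3: "real j*(real n - real j) \<le> (real j + 1)*(real n - real j)"
    using jn by (intro mult_right_mono) auto
  have key: "c*((real n - 2*real j)*(real n - 2*real j - 1)) \<le> (real j + 1)*(real n - real j)"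
    using k1 k2 k3 by linarith
  have "real (((n - Suc j) choose Suc j) * ((j+1)*(n-j))) = real (((n-j) choose j) * ((n-2*j)*(n-2*j-1)))"
    using ratio_id[OF jj] by metis
  then have F: "real ((n - Suc j) choose Suc j) * ((real j + 1) * real (n-j)) = real ((n-j) choose j) * (real (n-2*j) * real (n-2*j-1))"
    by (simp only: of_nat_mult of_nat_add of_nat_1)
  have e: "real (n - j) = real n - real j" "real (n - 2*j) = real n - 2*real j" "real (n-2*j-1) = real n - 2*real j - 1"
    using jj by (simp_all add: of_nat_diff)
  have idr: "tt n (Suc j) * ((real j + 1)*(real n - real j)) = tt n j * ((real n - 2*real j)*(real n - 2*real j - 1))"
    using F unfolding e tt_def by simp
  have jlt: "real j < real n" using jj by simp
  have "(c * tt n (Suc j)) * ((real j + 1)*(real n - real j)) = c * (tt n (Suc j) * ((real j + 1)*(real n - real j)))"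
    by (simp only: mult.assoc)
  also have "\<dots> = c * (tt n j * ((real n - 2*real j)*(real n - 2*real j - 1)))"
    by (simp only: idr)
  also have "\<dots> = tt n j * (c*((real n - 2*real j)*(real n - 2*real j - 1)))" by (simp add: algebra_simps)
  also have "\<dots> \<le> tt n j * ((real j + 1)*(real n - real j))"
    using key tt_nonneg by (intro mult_left_mono) auto
  finally show ?thesis using jlt by (simp add: mult_le_cancel_right_pos)
qed

lemma iter_low:
  assumes st: "\<And>j. real j \<le> B \<Longrightarrow> c * tt n j \<le> tt n (Suc j)" and c: "c > 0"
  shows "real (k+i) \<le> B \<Longrightarrow> c^i * tt n k \<le> tt n (k+i)"
proof (induction i)
  case 0 show ?case by simp
next
  case (Suc i)
  have h: "real (k+i) \<le> B" using Suc.prems by simp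
  then have "c^i * tt n k \<le> tt n (k+i)" by (rule Suc.IH)
  then have "c * (c^i * tt n k) \<le> c * tt n (k+i)" using c by (intro mult_left_mono) auto
  also have "\<dots> \<le> tt n (Suc (k+i))" using st h by blast
  finally show ?case by (simp add: mult.assoc)
qed

lemma iter_up:
  assumes st: "\<And>j. real j \<ge> B \<Longrightarrow> c * tt n (Suc j) \<le> tt n j" and c: "c > 0"
  shows "real k \<ge> B \<Longrightarrow> c^i * tt n (k+i) \<le> tt n k"
proof (induction i)
  case 0 show ?case by simp
next
  case (Suc i)
  have h: "real (k+i) \<ge> B" using Suc.prems by simp
  have "c^Suc i * tt n (k + Suc i) = c^i * (c * tt n (Suc (k+i)))" by (simp add: algebra_simps)
  also have "\<dots> \<le> c^i * tt n (k+i)" using st[OF h] c by (intro mult_left_mono) auto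
  also have "\<dots> \<le> tt n k" using Suc by blast
  finally show ?case .
qed

lemma pow_bound:
  fixes x r y :: real
  assumes "x \<le> r * y" "0 \<le> x" "0 \<le> r" "r \<le> 1" "m \<ge> 1" "0 \<le> y"
  shows "x^m \<le> r * y^m"
proof -
  have "x^m \<le> (r*y)^m" by (rule power_mono) (use assms in auto)
  also have "\<dots> = r^m * y^m" by (simp add: power_mult_distrib)
  also have "\<dots> \<le> r^1 * y^m" using assms by (intro mult_right_mono power_decreasing) auto
  finally show ?thesis by simp
qed

lemma shift_sum:
  assumes inj: "inj_on h S" and img: "\<And>k. k\<in>S \<Longrightarrow> h k \<le> n"
    and bound: "\<And>k. k\<in>S \<Longrightarrow> tt n k ^ m \<le> r * tt n (h k) ^ m" and r: "r \<ge> 0"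
  shows "(\<Sum>k\<in>S. tt n k ^ m) \<le> r * (\<Sum>k=0..n. tt n k ^ m)"
proof -
  have "(\<Sum>k\<in>S. tt n k ^ m) \<le> (\<Sum>k\<in>S. r * tt n (h k) ^ m)" by (rule sum_mono) (rule bound)
  also have "\<dots> = r * (\<Sum>k\<in>h`S. tt n k ^ m)"
    by (simp add: sum_distrib_left sum.reindex[OF inj])
  also have "(\<Sum>k\<in>h`S. tt n k ^ m) \<le> (\<Sum>k=0..n. tt n k ^ m)"
    by (rule sum_mono2) (auto simp: img tt_nonneg)
  then have "r * (\<Sum>k\<in>h`S. tt n k ^ m) \<le> r * (\<Sum>k=0..n. tt n k ^ m)" using r by (rule mult_left_mono)
  finally show ?thesis .
qed

lemma low_mass:
  assumes beta: "beta < alpha" and e: "e > 0" and m: "m \<ge> 1"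
  shows "eventually (\<lambda>n. (\<Sum>k\<in>{k\<in>{0..n}. real k < beta*(real n+1)}. tt n k^m) \<le> e * (\<Sum>k=0..n. tt n k^m)) sequentially"
proof -
  define b where "b = (beta+alpha)/2"
  have b: "beta < b" "b < alpha" "b < 1/2" using beta alpha_bounds by (auto simp: b_def)
  define g where "g = 5*b^2 - 5*b + 1"
  have g: "g > 0" using g_pos b unfolding g_def by auto
  define c where "c = 1 + g/2"
  define Q where "Q = (1-2*b)^2 - c*b*(1-b)"
  have bb: "b*(1-b) \<le> 1/4"
  proof -
    have "0 \<le> (b - 1/2)^2" by simp
    then show ?thesis by (simp add: power2_eq_square algebra_simps)
  qed
  have Qe: "Q = g - g/2*(b*(1-b))"
    by (simp add: Q_def c_def g_def power2_eq_square algebra_simps)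
  have "g/2*(b*(1-b)) \<le> g/2*(1/4)" using g bb by (intro mult_left_mono) auto
  then have Q: "Q > 0" using Qe g by linarith
  have c1: "c > 1" using g by (simp add: c_def)
  obtain L where L: "(1/c)^L < e" using real_arch_pow_inv[of e "1/c"] e c1 by auto
  have ev: "eventually (\<lambda>n. (1+c)/Q \<le> real n \<and> (beta + real L)/(b - beta) \<le> real n) sequentially"
    by (intro eventually_conj ev_ge)
  show ?thesis
  proof (rule eventually_mono[OF ev], elim conjE)
    fix n assume n1: "(1+c)/Q \<le> real n" and n2: "(beta + real L)/(b - beta) \<le> real n"
    have n2': "beta + real L \<le> real n * (b - beta)" using n2 b by (simp add: pos_divide_le_eq)
    have st: "\<And>j. real j \<le> b * real n \<Longrightarrow> c * tt n j \<le> tt n (Suc j)"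
      by (rule step_low[OF b(3) Q_def Q]) (use c1 n1 in auto)
    have nn: "0 \<le> real n" by simp
    have bn: "b * real n \<le> real n"
    proof -
      have "b * real n \<le> 1 * real n" using b nn by (intro mult_right_mono) auto
      then show ?thesis by simp
    qed
    let ?S = "{k\<in>{0..n}. real k < beta*(real n+1)}"
    have kL: "real (k+L) \<le> b * real n" if "k \<in> ?S" for k
    proof -
      have "real k < beta * real n + beta" using that by (simp add: algebra_simps)
      then show ?thesis using n2' by (simp add: algebra_simps)
    qed
    have r0: "0 \<le> (1/c)^L" "(1/c)^L \<le> 1" using c1 by (auto intro!: power_le_one)
    have "(\<Sum>k\<in>?S. tt n k^m) \<le> (1/c)^L * (\<Sum>k=0..n. tt n k^m)"
    proof (rule shift_sum[where h="\<lambda>k. k+L"])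
      show "inj_on (\<lambda>k. k + L) ?S" by (simp add: inj_on_def)
      show "k + L \<le> n" if "k \<in> ?S" for k
      proof -
        have "real (k+L) \<le> real n" using kL[OF that] bn by linarith
        then show ?thesis by linarith
      qed
      show "tt n k ^ m \<le> (1/c)^L * tt n (k+L) ^ m" if "k \<in> ?S" for k
      proof (rule pow_bound)
        have cpos: "c > 0" using c1 by simp
        have "c^L * tt n k \<le> tt n (k+L)" by (rule iter_low[where B="b*real n"]) (use st cpos kL[OF that] in auto)
        then have "(1/c)^L * (c^L * tt n k) \<le> (1/c)^L * tt n (k+L)" using r0 by (intro mult_left_mono) auto
        moreover have "(1/c)^L * (c^L * tt n k) = tt n k" using c1 by (simp add: power_one_over field_simps)
        ultimately show "tt n k \<le> (1/c)^L * tt n (k+L)" by simp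
      qed (use r0 m tt_nonneg in auto)
    qed (use r0 in auto)
    also have "\<dots> \<le> e * (\<Sum>k=0..n. tt n k^m)"
      using L by (intro mult_right_mono sum_nonneg) (auto simp: tt_nonneg)
    finally show "(\<Sum>k\<in>?S. tt n k^m) \<le> e * (\<Sum>k=0..n. tt n k^m)" .
  qed
qed

lemma up_mass:
  assumes ga: "alpha < gam" "gam < 1/2" and e: "e > 0" and m: "m \<ge> 1"
  shows "eventually (\<lambda>n. (\<Sum>k\<in>{k\<in>{0..n}. real k > gam*real n}. tt n k^m) \<le> e * (\<Sum>k=0..n. tt n k^m)) sequentially"
proof -
  define b where "b = (alpha+gam)/2"
  have b: "alpha < b" "b < gam" "b < 1/2" "0 < b" using ga alpha_bounds by (auto simp: b_def)
  define g where "g = 5*b^2 - 5*b + 1"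
  have g: "g < 0" using g_neg b unfolding g_def by auto
  define c where "c = 1 - g/2"
  have sq: "(1-2*b)^2 \<le> 1"
  proof -
    have "0 \<le> 1-2*b" "1-2*b \<le> 1" using b by auto
    then show ?thesis by (simp add: power_le_one)
  qed
  have Qe: "c*(1-2*b)^2 - b*(1-b) = g - g/2*(1-2*b)^2"
    by (simp add: c_def g_def power2_eq_square algebra_simps)
  have "g/2*(1-2*b)^2 \<ge> g/2*1" using g sq by (intro mult_left_mono_neg) auto
  then have Q: "c*(1-2*b)^2 - b*(1-b) \<le> 0" using Qe g by linarith
  have c1: "c > 1" using g by (simp add: c_def)
  obtain L where L: "(1/c)^L < e" using real_arch_pow_inv[of e "1/c"] e c1 by auto
  have ev: "eventually (\<lambda>n. real L/(gam - b) \<le> real n) sequentially"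
    by (rule ev_ge)
  show ?thesis
  proof (rule eventually_mono[OF ev])
    fix n assume n2: "real L/(gam - b) \<le> real n"
    have n2': "real L \<le> real n * (gam - b)" using n2 b by (simp add: pos_divide_le_eq)
    have st: "\<And>j. real j \<ge> b * real n \<Longrightarrow> c * tt n (Suc j) \<le> tt n j"
      by (rule step_up[OF b(3) b(4) Q]) (use c1 in auto)
    let ?S = "{k\<in>{0..n}. real k > gam*real n}"
    have kL: "real k - real L \<ge> b * real n" "L \<le> k" if "k \<in> ?S" for k
    proof -
      have "real k > gam * real n" using that by simp
      then show "real k - real L \<ge> b * real n" using n2' by (simp add: algebra_simps)
      moreover have "b * real n \<ge> 0" using b by simp
      ultimately show "L \<le> k" by linarith
    qed
    have r0: "0 \<le> (1/c)^L" "(1/c)^L \<le> 1" using c1 by (auto intro!: power_le_one)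
    have "(\<Sum>k\<in>?S. tt n k^m) \<le> (1/c)^L * (\<Sum>k=0..n. tt n k^m)"
    proof (rule shift_sum[where h="\<lambda>k. k-L"])
      show "inj_on (\<lambda>k. k - L) ?S" using kL(2) by (auto simp: inj_on_def) (metis le_add_diff_inverse2)
      show "k - L \<le> n" if "k \<in> ?S" for k using that by auto
      show "tt n k ^ m \<le> (1/c)^L * tt n (k-L) ^ m" if "k \<in> ?S" for k
      proof (rule pow_bound)
        have kk: "k - L + L = k" using kL(2)[OF that] by simp
        have "real (k - L) \<ge> b * real n" using kL[OF that] by (simp add: of_nat_diff)
        moreover have cpos: "c > 0" using c1 by simp
        ultimately have "c^L * tt n (k - L + L) \<le> tt n (k - L)" by (intro iter_up[OF st]) auto
        then have "c^L * tt n k \<le> tt n (k-L)" unfolding kk .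
        then have "(1/c)^L * (c^L * tt n k) \<le> (1/c)^L * tt n (k-L)" using r0 by (intro mult_left_mono) auto
        moreover have "(1/c)^L * (c^L * tt n k) = tt n k" using c1 by (simp add: power_one_over field_simps)
        ultimately show "tt n k \<le> (1/c)^L * tt n (k-L)" by simp
      qed (use r0 m tt_nonneg in auto)
    qed (use r0 in auto)
    also have "\<dots> \<le> e * (\<Sum>k=0..n. tt n k^m)"
      using L by (intro mult_right_mono sum_nonneg) (auto simp: tt_nonneg)
    finally show "(\<Sum>k\<in>?S. tt n k^m) \<le> e * (\<Sum>k=0..n. tt n k^m)" .
  qed
qed

lemma absorb_real:
  assumes "k \<le> n" "2*k \<le> Suc n"
  shows "tt (Suc n) k * (real n + 1 - 2*real k) = tt n k * (real n + 1 - real k)"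
proof -
  have "real (((Suc n - k) choose k) * (Suc n - 2*k)) = real (((n - k) choose k) * (Suc n - k))"
    using absorb_id[OF assms(1)] by metis
  then have F: "real ((Suc n - k) choose k) * real (Suc n - 2*k) = real ((n - k) choose k) * real (Suc n - k)"
    by (simp only: of_nat_mult)
  have e: "real (Suc n - 2*k) = real n + 1 - 2*real k" "real (Suc n - k) = real n + 1 - real k"
    using assms by (simp_all add: of_nat_diff)
  show ?thesis using F unfolding e tt_def by simp
qed

lemma P1:
  fixes gam :: real
  assumes k: "k \<le> n" and g: "gam < 1/2" and kg: "real k \<le> gam*(real n+1)"
  shows "tt (Suc n) k \<le> (1-gam)/(1-2*gam) * tt n k"
proof -
  define N where "N = real n + 1"
  have "gam * N < (1/2) * N" using g by (intro mult_strict_right_mono) (auto simp: N_def)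
  then have "real k < (1/2) * N" using kg unfolding N_def[symmetric] by linarith
  then have "N - 2*real k > 0" by linarith
  then have N2: "real n + 1 - 2*real k > 0" unfolding N_def by simp
  then have "real (2*k) < real (Suc n)" by simp
  then have "2*k \<le> Suc n" by linarith
  note id = absorb_real[OF k this]
  have g2: "1 - 2*gam > 0" using g by simp
  have "(real n + 1 - real k)*(1-2*gam) - (1-gam)*(real n + 1 - 2*real k) = real k - gam*(real n+1)"
    by (simp add: algebra_simps)
  then have ineq: "(real n + 1 - real k)*(1-2*gam) \<le> (1-gam)*(real n + 1 - 2*real k)" using kg by linarith
  have "tt (Suc n) k * ((real n + 1 - 2*real k)*(1-2*gam)) = tt n k * ((real n + 1 - real k)*(1-2*gam))"
    using id by (simp only: mult.assoc[symmetric])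
  also have "\<dots> \<le> tt n k * ((1-gam)*(real n + 1 - 2*real k))" using ineq tt_nonneg by (intro mult_left_mono) auto
  also have "\<dots> = ((1-gam)/(1-2*gam) * tt n k) * ((real n + 1 - 2*real k)*(1-2*gam))"
    using g2 by (simp add: field_simps)
  finally show ?thesis by (rule mult_right_le_imp_le) (use N2 g2 in simp)
qed

lemma P2:
  fixes beta :: real
  assumes k: "k \<le> n" and b: "beta < 1/2" and kb: "real k \<ge> beta*(real n+1)"
  shows "(1-beta)/(1-2*beta) * tt n k \<le> tt (Suc n) k"
proof (cases "2*k \<le> n")
  case False
  then have "tt n k = 0" by (simp add: tt_def)
  then show ?thesis using tt_nonneg[of "Suc n" k] by simp
next
  case True
  then have N2: "real n + 1 - 2*real k > 0" by linarith
  have "2*k \<le> Suc n" using True by simp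
  note id = absorb_real[OF k this]
  have g2: "1 - 2*beta > 0" using b by simp
  have "(real n + 1 - real k)*(1-2*beta) - (1-beta)*(real n + 1 - 2*real k) = real k - beta*(real n+1)"
    by (simp add: algebra_simps)
  then have ineq: "(1-beta)*(real n + 1 - 2*real k) \<le> (real n + 1 - real k)*(1-2*beta)" using kb by linarith
  have "((1-beta)/(1-2*beta) * tt n k) * ((real n + 1 - 2*real k)*(1-2*beta)) = tt n k * ((1-beta)*(real n + 1 - 2*real k))"
    using g2 by (simp add: field_simps)
  also have "\<dots> \<le> tt n k * ((real n + 1 - real k)*(1-2*beta))" using ineq tt_nonneg by (intro mult_left_mono) auto
  also have "\<dots> = tt (Suc n) k * ((real n + 1 - 2*real k)*(1-2*beta))"
    using id by (simp only: mult.assoc[symmetric])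
  finally show ?thesis by (rule mult_right_le_imp_le) (use N2 g2 in simp)
qed

lemma phi_sq: "((1 + sqrt 5)/2)^2 = (1 + sqrt 5)/2 + 1"
proof -
  have "sqrt 5 * sqrt 5 = 5" by simp
  then show ?thesis by (simp add: power2_eq_square field_simps)
qed

lemma fib_phi: "((1+sqrt 5)/2)^m = (real (fibo m) * sqrt 5 + real (lucas m))/2"
proof -
  define p where "p = (1+sqrt 5)/2"
  have p2: "p^2 = p + 1" unfolding p_def by (rule phi_sq)
  have "p^m = (real (fibo m) * sqrt 5 + real (lucas m))/2 \<and>
        p^Suc m = (real (fibo (Suc m)) * sqrt 5 + real (lucas (Suc m)))/2"
  proof (induction m)
    case 0 then show ?case by (simp add: p_def)
  next
    case (Suc m)
    have IH1: "p^m = (real (fibo m) * sqrt 5 + real (lucas m))/2"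
      and IH2: "p^Suc m = (real (fibo (Suc m)) * sqrt 5 + real (lucas (Suc m)))/2" using Suc by auto
    have "p^Suc (Suc m) = p^m * p^2" by (simp add: power2_eq_square algebra_simps)
    also have "\<dots> = p^Suc m + p^m" by (simp add: p2 algebra_simps)
    also have "\<dots> = (real (fibo (Suc m)) * sqrt 5 + real (lucas (Suc m)))/2 + (real (fibo m) * sqrt 5 + real (lucas m))/2"
      by (simp only: IH1 IH2)
    also have "\<dots> = (real (fibo (Suc (Suc m))) * sqrt 5 + real (lucas (Suc (Suc m))))/2"
      by (simp add: field_simps)
    finally show ?case using IH2 by simp
  qed
  then show ?thesis unfolding p_def by blast
qed

lemma sum_split:
  fixes g :: "nat \<Rightarrow> real"
  assumes that: "finite A"
  shows "(\<Sum>k\<in>A. g k) = (\<Sum>k\<in>{k\<in>A. P k}. g k) + (\<Sum>k\<in>{k\<in>A. \<not> P k}. g k)"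
proof -
  have "A = {k\<in>A. P k} \<union> {k\<in>A. \<not> P k}" by auto
  then have "(\<Sum>k\<in>A. g k) = (\<Sum>k\<in>{k\<in>A. P k} \<union> {k\<in>A. \<not> P k}. g k)" by simp
  also have "\<dots> = (\<Sum>k\<in>{k\<in>A. P k}. g k) + (\<Sum>k\<in>{k\<in>A. \<not> P k}. g k)"
    by (rule sum.union_disjoint) (use that in auto)
  finally show ?thesis .
qed

theorem proposition1:
  fixes m :: nat
  assumes "m \<ge> 1"
  shows "(\<lambda>n. real (D (Suc n) m) / real (D n m))
           \<longlonglongrightarrow> (real (fibo m) * sqrt 5 + real (lucas m)) / 2"
proof -
  define phi where "phi = (1 + sqrt 5)/2"
  define f where "f = (\<lambda>x::real. (1-x)/(1-2*x))"
  have falpha: "f alpha = phi"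
  proof -
    have "sqrt 5 * sqrt 5 = 5" by simp
    then show ?thesis unfolding f_def phi_def alpha_def using s5 by (simp add: field_simps)
  qed
  have "isCont (\<lambda>x. f x ^ m) alpha" unfolding f_def using alpha_bounds by (intro continuous_intros) auto
  then have lim: "((\<lambda>x. f x ^ m) \<longlongrightarrow> phi^m) (at alpha)" using falpha by (simp add: isCont_def)
  then have limL: "((\<lambda>x. f x ^ m) \<longlongrightarrow> phi^m) (at_left alpha)"
    and limR: "((\<lambda>x. f x ^ m) \<longlongrightarrow> phi^m) (at_right alpha)"
    using filterlim_at_split by auto
  define DD where "DD = (\<lambda>n. (\<Sum>k=0..n. tt n k ^ m))"
  have DD1: "DD n \<ge> 1" for n
  proof -
    have "(\<Sum>k\<in>{0}. tt n k ^ m) \<le> DD n" unfolding DD_def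
      by (rule sum_mono2) (auto simp: tt_nonneg)
    then show ?thesis by (simp add: tt_def)
  qed
  have rat: "(\<lambda>n. real (D (Suc n) m) / real (D n m)) = (\<lambda>n. DD (Suc n) / DD n)"
    by (simp add: D_real DD_def)
  have target: "(real (fibo m) * sqrt 5 + real (lucas m)) / 2 = phi^m"
    by (simp add: phi_def fib_phi)
  show ?thesis unfolding rat target
  proof (rule order_tendstoI)
    fix a assume a: "a < phi^m"
    have "eventually (\<lambda>x. a < f x ^ m) (at_left alpha)" using order_tendstoD(1)[OF limL a] .
    then obtain b where b: "b < alpha" "\<And>y. b < y \<Longrightarrow> y < alpha \<Longrightarrow> a < f y ^ m"
      unfolding eventually_at_left_field by auto
    define beta where "beta = (b + alpha)/2"
    have be: "beta < alpha" "beta < 1/2" "a < f beta ^ m" using b alpha_bounds by (auto simp: beta_def)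
    define p where "p = f beta ^ m"
    have fpos: "f beta > 0" using be unfolding f_def by (auto intro!: divide_pos_pos)
    have p0: "p > 0" using fpos by (simp add: p_def)
    have pa: "a < p" using be by (simp add: p_def)
    define e where "e = (p - max a 0)/(2*p)"
    have e0: "e > 0" using p0 pa by (simp add: e_def)
    have pe: "p*(1-e) > a"
    proof -
      have eq: "p*(1-e) = (p + max a 0)/2" using p0 by (simp add: e_def field_simps)
      have "a < (p + max a 0)/2" using pa by (simp add: max_def)
      then show ?thesis unfolding eq .
    qed
    show "eventually (\<lambda>n. a < DD (Suc n) / DD n) sequentially"
    proof (rule eventually_mono[OF low_mass[OF be(1) e0 assms]])
      fix n
      let ?S = "{k\<in>{0..n}. real k < beta*(real n+1)}"
      let ?T = "{k\<in>{0..n}. \<not> real k < beta*(real n+1)}"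
      assume low: "(\<Sum>k\<in>?S. tt n k^m) \<le> e * (\<Sum>k=0..n. tt n k^m)"
      have "DD n = (\<Sum>k\<in>?S. tt n k^m) + (\<Sum>k\<in>?T. tt n k^m)"
        unfolding DD_def by (rule sum_split) simp
      then have T: "(\<Sum>k\<in>?T. tt n k^m) \<ge> (1-e) * DD n" using low unfolding DD_def by (simp add: algebra_simps)
      have "p * (\<Sum>k\<in>?T. tt n k^m) = (\<Sum>k\<in>?T. (f beta * tt n k)^m)"
        by (simp add: p_def sum_distrib_left power_mult_distrib)
      also have "\<dots> \<le> (\<Sum>k\<in>?T. tt (Suc n) k^m)"
      proof (rule sum_mono)
        fix k assume "k \<in> ?T"
        then have "f beta * tt n k \<le> tt (Suc n) k" unfolding f_def using P2[of k n beta] be by auto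
        then show "(f beta * tt n k)^m \<le> tt (Suc n) k^m" using fpos tt_nonneg by (intro power_mono) auto
      qed
      also have "\<dots> \<le> DD (Suc n)" unfolding DD_def by (rule sum_mono2) (auto simp: tt_nonneg)
      finally have "p * (\<Sum>k\<in>?T. tt n k^m) \<le> DD (Suc n)" .
      moreover have "p * ((1-e) * DD n) \<le> p * (\<Sum>k\<in>?T. tt n k^m)" using T p0 by (intro mult_left_mono) auto
      ultimately have "(p * (1-e)) * DD n \<le> DD (Suc n)" by (simp add: algebra_simps)
      moreover have "a * DD n < (p*(1-e)) * DD n" using pe DD1[of n] by (intro mult_strict_right_mono) auto
      ultimately have "a * DD n < DD (Suc n)" by linarith
      then show "a < DD (Suc n) / DD n" using DD1[of n] by (simp add: pos_less_divide_eq)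
    qed
  next
    fix a assume a: "phi^m < a"
    have "eventually (\<lambda>x. f x ^ m < a) (at_right alpha)" using order_tendstoD(2)[OF limR a] .
    then obtain d where d: "alpha < d" "\<And>y. alpha < y \<Longrightarrow> y < d \<Longrightarrow> f y ^ m < a"
      unfolding eventually_at_right_field by auto
    define gam where "gam = min ((alpha + d)/2) ((alpha + 1/2)/2)"
    have ga: "alpha < gam" "gam < 1/2" "f gam ^ m < a"
      using d alpha_bounds by (auto simp: gam_def min_def)
    define q where "q = f gam ^ m"
    have fpos: "f gam > 0" using ga unfolding f_def by (auto intro!: divide_pos_pos)
    have q0: "q > 0" using fpos by (simp add: q_def)
    have qa: "q < a" using ga by (simp add: q_def)
    define e where "e = (a - q)/(2*a)"
    have e0: "e > 0" "e < 1" using q0 qa by (auto simp: e_def)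
    have qe: "q < a*(1-e)"
    proof -
      have eq: "a*(1-e) = (a + q)/2" using q0 qa by (simp add: e_def field_simps)
      have "q < (a + q)/2" using qa by simp
      then show ?thesis unfolding eq .
    qed
    have ev: "eventually (\<lambda>n. (\<Sum>k\<in>{k\<in>{0..Suc n}. real k > gam*real (Suc n)}. tt (Suc n) k^m) \<le> e * DD (Suc n)) sequentially"
      using up_mass[OF ga(1) ga(2) e0(1) assms] unfolding DD_def
      by (rule eventually_sequentially_Suc[THEN iffD2])
    show "eventually (\<lambda>n. DD (Suc n) / DD n < a) sequentially"
    proof (rule eventually_mono[OF ev])
      fix n
      let ?S = "{k\<in>{0..Suc n}. real k > gam*real (Suc n)}"
      let ?T = "{k\<in>{0..Suc n}. \<not> real k > gam*real (Suc n)}"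
      assume up: "(\<Sum>k\<in>?S. tt (Suc n) k^m) \<le> e * DD (Suc n)"
      have split: "DD (Suc n) = (\<Sum>k\<in>?T. tt (Suc n) k^m) + (\<Sum>k\<in>?S. tt (Suc n) k^m)"
        unfolding DD_def by (subst sum_split[where P="\<lambda>k. \<not> real k > gam*real (Suc n)"]) auto
      have kn: "k \<le> n" and kg: "real k \<le> gam * (real n + 1)" if kT: "k \<in> ?T" for k
      proof -
        show kg: "real k \<le> gam * (real n + 1)" using kT by (auto simp: add.commute)
        define N where "N = real n + 1"
        have "gam * N < 1 * N" using ga by (intro mult_strict_right_mono) (auto simp: N_def)
        then have "real k < N" using kg unfolding N_def[symmetric] by linarith
        then have "real k < real (Suc n)" unfolding N_def by simp
        then show "k \<le> n" by simp
      qed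
      have "(\<Sum>k\<in>?T. tt (Suc n) k^m) \<le> (\<Sum>k\<in>?T. q * tt n k^m)"
      proof (rule sum_mono)
        fix k assume kT: "k \<in> ?T"
        have "tt (Suc n) k \<le> f gam * tt n k" unfolding f_def using P1[OF kn[OF kT] ga(2) kg[OF kT]] .
        then have "tt (Suc n) k^m \<le> (f gam * tt n k)^m" using tt_nonneg by (intro power_mono) auto
        then show "tt (Suc n) k^m \<le> q * tt n k^m" by (simp add: q_def power_mult_distrib)
      qed
      also have "\<dots> = q * (\<Sum>k\<in>?T. tt n k^m)" by (simp add: sum_distrib_left)
      also have "(\<Sum>k\<in>?T. tt n k^m) \<le> DD n" unfolding DD_def
        by (rule sum_mono2) (use kn in \<open>auto simp: tt_nonneg\<close>)
      then have "q * (\<Sum>k\<in>?T. tt n k^m) \<le> q * DD n" using q0 by (intro mult_left_mono) auto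
      finally have "DD (Suc n) \<le> q * DD n + e * DD (Suc n)" using split up by linarith
      then have A: "DD (Suc n) * (1 - e) \<le> q * DD n" by (simp add: algebra_simps)
      have "q * DD n < (a*(1-e)) * DD n" using qe DD1[of n] by (intro mult_strict_right_mono) auto
      with A have "DD (Suc n) * (1-e) < (a * DD n) * (1-e)" by (simp add: algebra_simps)
      then have "DD (Suc n) < a * DD n" using e0 by (simp add: mult_less_cancel_right)
      then show "DD (Suc n) / DD n < a" using DD1[of n] by (simp add: pos_divide_less_eq)
    qed
  qed
qed

end
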